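(* Let $\mathcal{Z}=\mathcal{X}\times\mathcal{Y}$, let $F$ be a class of prediction functions $f:\mathcal{X}\to\mathcal{Y}$ parametrized as $f_\theta$, $\theta\in\Theta=\mathbb{R}^m$, and let the loss be $\ell(\theta;(x,y))=L(f_\theta(x),y)$ for a function $L$, continuous in $\theta$, with $|\ell(\theta;z)|\le T_\ell$ for all $\theta\in\Theta$, $z\in\mathcal{Z}$. Let $P_0$ be a distribution on $\mathcal{Z}$ and $\hat P_n$ the empirical distribution of $n$ i.i.d. samples from $P_0$. Fix a weight vector $w\in[1,\infty)^{m+1}$ and the cost $c_w(z_1,z_2)=\|w\odot(z_1-z_2)\|_2^2$. Then there is a numerical constant $k\ge 0$ such that for every $\theta\in\Theta$, $\rho\ge 0$, $\lambda\ge 0$ and $\delta\in(0,1)$, with probability at least $1-\delta$ over the sample, $$\sup_{P:\,W_{c_w}(P,P_0)\le\rho}\mathbb{E}_P[\ell(\theta;Z)]\le \lambda\rho+\mathbb{E}_{\hat P_n}[s_\lambda(\theta;Z)]+\mathcal{R}_n(\widetilde{\ell}\circ F)+kT_\ell\sqrt{\frac{\ln(1/\delta)}{n}}.$$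
   Context: $W_{c}(P,Q)=\inf_{M\in\Pi(P,Q)}\mathbb{E}_{(z,z')\sim M}[c(z,z')]$ is the Wasserstein distance with cost $c$, $\Pi(P,Q)$ being the couplings of $P$ and $Q$; $\odot$ is the coordinatewise product. The robust surrogate is $s_\lambda(\theta;z)=\sup_{\xi\in\mathcal{Z}}\big(\ell(\theta;\xi)-\lambda c_w(\xi,z)\big)$. The class $\widetilde{\ell}\circ F=\{(x,y)\mapsto L(f(x),y)-L(0,y): f\in F\}$, and for a class $G$ of functions on $\mathcal{Z}$, $\mathcal{R}_n(G)=\mathbb{E}\big[\sup_{g\in G}\frac1n\sum_{i=1}^n\sigma_i g(Z_i)\big]$ with $Z_i$ i.i.d. from $P_0$ and $\sigma_i$ i.i.d. uniform signs in $\{-1,+1\}$ independent of the $Z_i$. *)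

theory Defs
  imports "HOL-Probability.Probability"
begin

text \<open>Data space Z = R^m x R, with R^m rendered as extensional functions nat => real
  on the index set {..<m} (so that the dimension m can be quantified inside the statement).\<close>

definition Zmeas :: "nat \<Rightarrow> ((nat \<Rightarrow> real) \<times> real) measure" where
  "Zmeas m = (PiM {..<m} (\<lambda>_. borel)) \<Otimes>\<^sub>M (borel :: real measure)"

definition Theta :: "nat \<Rightarrow> (nat \<Rightarrow> real) set" where
  "Theta m = PiE {..<m} (\<lambda>_. UNIV)"

definition cost_w :: "nat \<Rightarrow> (nat \<Rightarrow> real) \<Rightarrow> ((nat \<Rightarrow> real) \<times> real) \<Rightarrow> ((nat \<Rightarrow> real) \<times> real) \<Rightarrow> real" where
  "cost_w m w z1 z2 =
     (\<Sum>i<m. (w i * (fst z1 i - fst z2 i))\<^sup>2) + (w m * (snd z1 - snd z2))\<^sup>2"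

definition couplings :: "'a measure \<Rightarrow> 'a measure \<Rightarrow> 'a measure \<Rightarrow> ('a \<times> 'a) measure set" where
  "couplings Mz P Q = {M. prob_space M \<and> sets M = sets (Mz \<Otimes>\<^sub>M Mz) \<and>
                          distr M Mz fst = P \<and> distr M Mz snd = Q}"

definition wasserstein :: "'a measure \<Rightarrow> ('a \<Rightarrow> 'a \<Rightarrow> real) \<Rightarrow> 'a measure \<Rightarrow> 'a measure \<Rightarrow> ennreal" where
  "wasserstein Mz c P Q = (INF M \<in> couplings Mz P Q. \<integral>\<^sup>+ zz. ennreal (c (fst zz) (snd zz)) \<partial>M)"

definition dro_risk :: "'a measure \<Rightarrow> 'a set \<Rightarrow> ('a \<Rightarrow> 'a \<Rightarrow> real) \<Rightarrow> ('a \<Rightarrow> real) \<Rightarrow> 'a measure \<Rightarrow> real \<Rightarrow> real" where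
  "dro_risk Mz Zs c loss P0 rho =
     (SUP P \<in> {P. prob_space P \<and> sets P = sets Mz \<and> emeasure P Zs = 1 \<and>
                  wasserstein Mz c P P0 \<le> ennreal rho}. \<integral>z. loss z \<partial>P)"

definition surrogate :: "'a set \<Rightarrow> ('a \<Rightarrow> 'a \<Rightarrow> real) \<Rightarrow> ('a \<Rightarrow> real) \<Rightarrow> real \<Rightarrow> 'a \<Rightarrow> real" where
  "surrogate Zs c loss lam z = (SUP xi \<in> Zs. loss xi - lam * c xi z)"

definition rademacher_dist :: "real measure" where
  "rademacher_dist = measure_pmf (pmf_of_set {-1, 1})"

definition rad_space :: "nat \<Rightarrow> 'a measure \<Rightarrow> (nat \<Rightarrow> 'a \<times> real) measure" where
  "rad_space n P0 = PiM {..<n} (\<lambda>_. P0 \<Otimes>\<^sub>M rademacher_dist)"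

definition rad_integrand :: "nat \<Rightarrow> ('a \<Rightarrow> real) set \<Rightarrow> (nat \<Rightarrow> 'a \<times> real) \<Rightarrow> real" where
  "rad_integrand n G \<omega> = (SUP g \<in> G. (1 / real n) * (\<Sum>i<n. snd (\<omega> i) * g (fst (\<omega> i))))"

definition rademacher_complexity :: "nat \<Rightarrow> 'a measure \<Rightarrow> ('a \<Rightarrow> real) set \<Rightarrow> real" where
  "rademacher_complexity n P0 G = (\<integral>\<omega>. rad_integrand n G \<omega> \<partial>(rad_space n P0))"

definition sample_space :: "nat \<Rightarrow> 'a measure \<Rightarrow> (nat \<Rightarrow> 'a) measure" where
  "sample_space n P0 = PiM {..<n} (\<lambda>_. P0)"

end

theory Submission
  imports Defs
begin


lemma cost_nonneg: "cost_w m w a b \<ge> 0"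
  unfolding cost_w_def by (intro add_nonneg_nonneg sum_nonneg) auto

lemma cont_cost: "continuous_on UNIV (\<lambda>z. cost_w m w xi z)"
  unfolding cost_w_def
  by (intro continuous_intros continuous_on_product_then_coordinatewise[OF continuous_on_fst[OF continuous_on_id]])

lemma surrogate_borel:
  fixes l :: "(nat\<Rightarrow>real)\<times>real \<Rightarrow> real"
  assumes ne: "Zs \<noteq> {}" and bd: "\<forall>\<xi>\<in>Zs. l \<xi> \<le> T" and lam: "lam \<ge> 0"
  shows "surrogate Zs (cost_w m w) l lam \<in> borel_measurable borel"
proof (subst borel_measurable_iff_greater, intro allI)
  fix a
  have bdd: "bdd_above ((\<lambda>\<xi>. l \<xi> - lam * cost_w m w \<xi> z) ` Zs)" for z
  proof (rule bdd_aboveI2)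
    fix \<xi> assume "\<xi> \<in> Zs"
    then show "l \<xi> - lam * cost_w m w \<xi> z \<le> T"
      using bd lam cost_nonneg[of m w \<xi> z] by (smt (verit) mult_nonneg_nonneg)
  qed
  have "{z \<in> space borel. a < surrogate Zs (cost_w m w) l lam z}
      = (\<Union>\<xi>\<in>Zs. {z. a < l \<xi> - lam * cost_w m w \<xi> z})"
    unfolding surrogate_def using less_cSUP_iff[OF ne bdd] by auto
  also have "open \<dots>"
    by (intro open_UN ballI open_Collect_less continuous_intros cont_cost)
  finally show "{z \<in> space borel. a < surrogate Zs (cost_w m w) l lam z} \<in> sets borel" by simp
qed

lemma id_meas_Z: "(\<lambda>z. z) \<in> measurable (Zmeas m) (borel :: ((nat\<Rightarrow>real)\<times>real) measure)"
proof -
  have "(\<lambda>x. x) \<in> measurable (PiM {..<m} (\<lambda>_. borel)) (PiM UNIV (\<lambda>_::nat. borel :: real measure))"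
  proof (rule measurable_PiM_single')
    fix i :: nat
    show "(\<lambda>x. x i) \<in> borel_measurable (PiM {..<m} (\<lambda>_. borel))"
    proof (cases "i < m")
      case True then show ?thesis by (intro measurable_component_singleton) auto
    next
      case False
      show ?thesis
        by (rule measurable_cong[THEN iffD2, of _ _ "\<lambda>_. undefined"]) (use False in \<open>auto simp: space_PiM PiE_def extensional_def\<close>)
    qed
  qed (auto simp: space_PiM)
  then have *: "(\<lambda>x. x) \<in> measurable (PiM {..<m} (\<lambda>_. borel)) (borel :: (nat\<Rightarrow>real) measure)"
    by (simp only: measurable_cong_sets[OF refl sets_PiM_equal_borel])
  then have "(\<lambda>z. (fst z, snd z)) \<in> measurable (Zmeas m) (borel \<Otimes>\<^sub>M (borel :: real measure))"
    proof -
    have f1: "fst \<in> measurable (Zmeas m) (PiM {..<m} (\<lambda>_. borel :: real measure))"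
      unfolding Zmeas_def by (rule measurable_fst)
    have "(\<lambda>x. x) \<circ> fst \<in> measurable (Zmeas m) (borel :: (nat\<Rightarrow>real) measure)"
      by (rule measurable_comp[OF f1 *])
    then have "fst \<in> measurable (Zmeas m) (borel :: (nat\<Rightarrow>real) measure)"
      by (simp only: o_def)
    moreover have "snd \<in> measurable (Zmeas m) (borel :: real measure)"
      unfolding Zmeas_def by (rule measurable_snd)
    ultimately show ?thesis by (rule measurable_Pair)
  qed
  then have "(\<lambda>z. z) \<in> measurable (Zmeas m) (borel \<Otimes>\<^sub>M (borel :: real measure))" by simp
  then show ?thesis by (simp only: borel_prod)
qed



lemma weak_duality:
  fixes Mz :: "'a measure" and c :: "'a\<Rightarrow>'a\<Rightarrow>real" and l s :: "'a \<Rightarrow> real"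
  assumes P0: "prob_space P0" "sets P0 = sets Mz" "emeasure P0 Zs = 1" "Zs \<in> sets Mz"
    and l_meas: "l \<in> borel_measurable Mz" and l_bd: "\<forall>z\<in>Zs. \<bar>l z\<bar> \<le> T"
    and s_meas: "s \<in> borel_measurable Mz" and s_bd: "\<forall>z\<in>Zs. \<bar>s z\<bar> \<le> T"
    and c_meas: "(\<lambda>zz. c (fst zz) (snd zz)) \<in> borel_measurable (Mz \<Otimes>\<^sub>M Mz)"
    and c_nn: "\<And>a b. c a b \<ge> 0" and c_diag: "\<And>a. c a a = 0"
    and key: "\<forall>\<xi>\<in>Zs. \<forall>z\<in>Zs. l \<xi> \<le> s z + lam * c \<xi> z"
    and lam: "lam \<ge> 0" and rho: "\<rho> \<ge> 0"
  shows "dro_risk Mz Zs c l P0 \<rho> \<le> lam * \<rho> + (\<integral>z. s z \<partial>P0)"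
proof -
  interpret p0: prob_space P0 by fact
  define S where "S = {P. prob_space P \<and> sets P = sets Mz \<and> emeasure P Zs = 1 \<and>
                  wasserstein Mz c P P0 \<le> ennreal \<rho>}"
  have meas_P0: "measurable P0 = measurable Mz" by (intro ext measurable_cong_sets P0 refl)
  have bdint: "integrable P f" if "prob_space P" "sets P = sets Mz" "emeasure P Zs = 1"
     "f \<in> borel_measurable Mz" "\<forall>z\<in>Zs. \<bar>f z\<bar> \<le> T" for P f
  proof -
    interpret p: prob_space P by fact
    have fm: "f \<in> borel_measurable P" using that(2,4) measurable_cong_sets by blast
    have "AE z in P. z \<in> Zs"
      using that(2,3) P0(4) by (intro p.AE_prob_1) (simp add: p.emeasure_eq_measure)
    then have "AE z in P. norm (f z) \<le> norm T"
      by eventually_elim (use that(5) in auto)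
    then show ?thesis by (intro Bochner_Integration.integrable_bound[OF p.integrable_const[of T] fm]) 
  qed
  have P0S: "P0 \<in> S"
  proof -
    define M0 where "M0 = distr P0 (Mz \<Otimes>\<^sub>M Mz) (\<lambda>z. (z, z))"
    have dm: "(\<lambda>z. (z, z)) \<in> measurable P0 (Mz \<Otimes>\<^sub>M Mz)"
      unfolding meas_P0 by (intro measurable_Pair measurable_ident_sets refl)
    have M0c: "M0 \<in> couplings Mz P0 P0"
      unfolding couplings_def M0_def
      using dm P0(2) by (auto simp: distr_distr comp_def distr_id2 intro!: p0.prob_space_distr)
    have M0i: "(\<integral>\<^sup>+ zz. ennreal (c (fst zz) (snd zz)) \<partial>M0) = 0"
      unfolding M0_def using dm c_meas by (simp add: nn_integral_distr c_diag)
    have "wasserstein Mz c P0 P0 \<le> 0"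
      unfolding wasserstein_def by (rule INF_lower2[OF M0c]) (simp add: M0i)
    then show ?thesis unfolding S_def using P0 p0.prob_space_axioms by auto
  qed
  have bound: "(\<integral>z. l z \<partial>P) \<le> lam * \<rho> + (\<integral>z. s z \<partial>P0)" if "P \<in> S" for P
  proof (rule field_le_epsilon)
    fix e :: real assume e: "0 < e"
    define e' where "e' = e / (lam + 1)"
    have e': "e' > 0" "lam * e' \<le> e" using e lam by (auto simp: e'_def field_simps)
    from that have PS: "prob_space P" "sets P = sets Mz" "emeasure P Zs = 1"
      "wasserstein Mz c P P0 \<le> ennreal \<rho>" by (auto simp: S_def)
    interpret pp: prob_space P by (rule PS(1))
    have "wasserstein Mz c P P0 < ennreal (\<rho> + e')"
      using PS(4) e' rho by (meson ennreal_lessI le_less_trans less_add_same_cancel1)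
    then obtain M where M: "M \<in> couplings Mz P P0"
      and Mc: "(\<integral>\<^sup>+ zz. ennreal (c (fst zz) (snd zz)) \<partial>M) < ennreal (\<rho> + e')"
      unfolding wasserstein_def by (auto simp: INF_less_iff)
    from M have M': "prob_space M" "sets M = sets (Mz \<Otimes>\<^sub>M Mz)" "distr M Mz fst = P" "distr M Mz snd = P0"
      by (auto simp: couplings_def)
    interpret pm: prob_space M by fact
    have measM: "measurable M = measurable (Mz \<Otimes>\<^sub>M Mz)" by (intro ext measurable_cong_sets M' refl)
    have fstm: "fst \<in> measurable M Mz" and sndm: "snd \<in> measurable M Mz"
      unfolding measM by auto
    have cm: "(\<lambda>zz. c (fst zz) (snd zz)) \<in> borel_measurable M" unfolding measM by fact
    have il: "integrable P l" by (rule bdint[OF PS(1-3) l_meas l_bd])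
    have is0: "integrable P0 s" by (rule bdint[OF P0(1-3) s_meas s_bd])
    have eq1: "(\<integral>z. l z \<partial>P) = (\<integral>x. l (fst x) \<partial>M)"
      using integral_distr[OF fstm l_meas] M'(3) by simp
    have eq2: "(\<integral>z. s z \<partial>P0) = (\<integral>x. s (snd x) \<partial>M)"
      using integral_distr[OF sndm s_meas] M'(4) by simp
    have il': "integrable M (\<lambda>x. l (fst x))"
      using il M'(3) integrable_distr_eq[OF fstm l_meas] by simp
    have is': "integrable M (\<lambda>x. s (snd x))"
      using is0 M'(4) integrable_distr_eq[OF sndm s_meas] by simp
    have ic: "integrable M (\<lambda>zz. c (fst zz) (snd zz))"
      using Mc by (intro integrableI_nonneg cm) (auto simp: c_nn intro: order.strict_trans[OF _ ennreal_less_top])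
    have ceq: "(\<integral>zz. c (fst zz) (snd zz) \<partial>M) \<le> \<rho> + e'"
    proof -
      have "(\<integral>zz. c (fst zz) (snd zz) \<partial>M) = enn2real (\<integral>\<^sup>+ zz. ennreal (c (fst zz) (snd zz)) \<partial>M)"
        using cm c_nn by (intro integral_eq_nn_integral) auto
      also have "\<dots> \<le> \<rho> + e'"
        using Mc rho e' by (metis enn2real_ennreal enn2real_mono less_imp_le ennreal_less_top add_nonneg_nonneg less_imp_le)
      finally show ?thesis .
    qed
    have "AE z in P. z \<in> Zs"
      using PS P0(4) by (intro pp.AE_prob_1) (simp add: pp.emeasure_eq_measure)
    then have ae1: "AE x in M. fst x \<in> Zs"
      by (intro AE_distrD[OF fstm]) (unfold M'(3))
    have "AE z in P0. z \<in> Zs"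
      using P0 by (intro p0.AE_prob_1) (simp add: p0.emeasure_eq_measure)
    then have ae2: "AE x in M. snd x \<in> Zs"
      by (intro AE_distrD[OF sndm]) (unfold M'(4))
    have aek: "AE x in M. l (fst x) \<le> s (snd x) + lam * c (fst x) (snd x)"
      using ae1 ae2 by eventually_elim (use key in auto)
    have "(\<integral>x. l (fst x) \<partial>M) \<le> (\<integral>x. s (snd x) + lam * c (fst x) (snd x) \<partial>M)"
      by (intro integral_mono_AE il' Bochner_Integration.integrable_add is' integrable_mult_right ic aek)
    also have "\<dots> = (\<integral>x. s (snd x) \<partial>M) + lam * (\<integral>zz. c (fst zz) (snd zz) \<partial>M)"
      using is' ic by simp
    also have "\<dots> \<le> (\<integral>x. s (snd x) \<partial>M) + lam * (\<rho> + e')"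
      using ceq lam by (simp add: mult_left_mono)
    finally show "(\<integral>z. l z \<partial>P) \<le> lam * \<rho> + (\<integral>z. s z \<partial>P0) + e"
      using eq1 eq2 e' by (simp add: algebra_simps)
  qed
  show ?thesis
    unfolding dro_risk_def S_def[symmetric]
    using P0S bound by (intro cSUP_least) auto
qed



lemma indep_coords:
  fixes P0 :: "'a measure"
  assumes P0: "prob_space P0" and n: "n > 0"
  shows "prob_space.indep_vars (sample_space n P0) (\<lambda>_. P0) (\<lambda>i \<omega>. \<omega> i) {..<n}"
proof -
  let ?O = "sample_space n P0"
  interpret O: prob_space ?O unfolding sample_space_def by (intro prob_space_PiM P0)
  have rv: "(\<lambda>\<omega>. \<omega> i) \<in> measurable ?O P0" if "i \<in> {..<n}" for i
    unfolding sample_space_def using that by (intro measurable_component_singleton) auto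
  have "distr ?O (PiM {..<n} (\<lambda>_. P0)) (\<lambda>x. \<lambda>i\<in>{..<n}. x i) = distr ?O ?O (\<lambda>x. x)"
    unfolding sample_space_def
    by (intro distr_cong refl) (auto simp: space_PiM extensional_restrict PiE_def)
  also have "\<dots> = ?O" by (rule distr_id2) simp
  also have "\<dots> = PiM {..<n} (\<lambda>i. distr ?O P0 (\<lambda>\<omega>. \<omega> i))"
    unfolding sample_space_def
    by (intro PiM_cong refl distr_PiM_component[symmetric] P0) auto
  finally show ?thesis
    using n rv by (subst O.indep_vars_iff_distr_eq_PiM') auto
qed

lemma hoeffding_step:
  fixes P0 :: "'a measure" and g :: "'a \<Rightarrow> real"
  assumes P0: "prob_space P0" and gm: "g \<in> borel_measurable P0"
    and Zs: "Zs \<in> sets P0" "emeasure P0 Zs = 1" and gb: "\<forall>z\<in>Zs. \<bar>g z\<bar> \<le> T"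
    and n: "n > 0" and d: "0 < \<delta>" "\<delta> < 1"
  shows "\<exists>A \<in> sets (sample_space n P0). measure (sample_space n P0) A \<ge> 1 - \<delta> \<and>
           (\<forall>\<omega>\<in>A. (\<integral>z. g z \<partial>P0) \<le> (1 / real n) * (\<Sum>i<n. g (\<omega> i)) + sqrt 2 * T * sqrt (ln (1 / \<delta>) / real n))"
proof -
  let ?O = "sample_space n P0"
  interpret p0: prob_space P0 by fact
  interpret O: prob_space ?O unfolding sample_space_def by (intro prob_space_PiM P0)
  have spO: "space ?O = space (PiM {..<n} (\<lambda>_. P0))" by (simp add: sample_space_def)
  have aeZ: "AE z in P0. z \<in> Zs"
    using Zs by (intro p0.AE_prob_1) (simp add: p0.emeasure_eq_measure)
  have aeO: "AE \<omega> in ?O. \<omega> i \<in> Zs" if "i < n" for i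
    unfolding sample_space_def using that aeZ P0 by (intro AE_PiM_component) auto
  have Tnn: "T \<ge> 0"
  proof -
    from aeZ have "Zs \<noteq> {}" using p0.AE_False by (metis (full_types) empty_iff eventually_mono)
    then show ?thesis using gb by force
  qed
  have gi: "integrable P0 g"
    using aeZ gb by (intro Bochner_Integration.integrable_bound[OF p0.integrable_const[of T] gm])
      (auto elim!: eventually_mono)
  have comp_meas: "(\<lambda>\<omega>. \<omega> i) \<in> measurable ?O P0" if "i < n" for i
    unfolding sample_space_def using that by (intro measurable_component_singleton) auto
  have Xm: "(\<lambda>\<omega>. g (\<omega> i)) \<in> borel_measurable ?O" if "i < n" for i
    using measurable_compose[OF comp_meas[OF that] gm] .
  have EX: "(\<integral>\<omega>. g (\<omega> i) \<partial>?O) = (\<integral>z. g z \<partial>P0)" if "i < n" for i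
  proof -
    have "(\<integral>\<omega>. g (\<omega> i) \<partial>?O) = (\<integral>z. g z \<partial>distr ?O P0 (\<lambda>\<omega>. \<omega> i))"
      by (rule integral_distr[symmetric, OF comp_meas[OF that] gm])
    also have "distr ?O P0 (\<lambda>\<omega>. \<omega> i) = P0"
      unfolding sample_space_def using that P0 by (intro distr_PiM_component) auto
    finally show ?thesis .
  qed
  show ?thesis
  proof (cases "T = 0")
    case True
    define A where "A = {\<omega> \<in> space ?O. \<forall>i<n. \<omega> i \<in> Zs}"
    have Am: "A \<in> sets ?O"
    proof -
      have "A = space ?O \<inter> (\<Inter>i\<in>{..<n}. (\<lambda>\<omega>. \<omega> i) -` Zs \<inter> space ?O)"
        unfolding A_def by auto
      also have "\<dots> \<in> sets ?O"
        using n by (intro sets.Int[OF sets.top] sets.finite_INT) (auto intro!: measurable_sets[OF comp_meas Zs(1)])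
      finally show ?thesis .
    qed
    have aeall: "AE \<omega> in ?O. \<forall>i\<in>{..<n}. \<omega> i \<in> Zs"
      using aeO by (intro eventually_ball_finite) auto
    have "AE \<omega> in ?O. \<omega> \<in> A"
      using aeall AE_space by eventually_elim (auto simp: A_def)
    then have "measure ?O A = 1"
      using O.prob_eq_1[OF Am] by blast
    moreover have "(\<integral>z. g z \<partial>P0) = 0"
    proof -
      have "AE z in P0. g z = 0" using aeZ gb True by (auto elim!: eventually_mono)
      then show ?thesis by (rule integral_eq_zero_AE)
    qed
    moreover have "(\<Sum>i<n. g (\<omega> i)) = 0" if "\<omega> \<in> A" for \<omega>
      using that gb True unfolding A_def by (intro sum.neutral) fastforce
    ultimately show ?thesis using Am d True by (intro bexI[of _ A]) auto
  next
    case False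
    with Tnn have Tpos: "T > 0" by auto
    interpret H: Hoeffding_ineq ?O "{..<n}" "\<lambda>i \<omega>. g (\<omega> i)" "\<lambda>_. -T" "\<lambda>_. T" "\<Sum>i\<in>{..<n}. \<integral>\<omega>. g (\<omega> i) \<partial>?O"
    proof unfold_locales
      show "prob_space.indep_vars ?O (\<lambda>_. borel) (\<lambda>i \<omega>. g (\<omega> i)) {..<n}"
        using O.indep_vars_compose2[OF indep_coords[OF P0 n], of "\<lambda>_. g" "\<lambda>_. borel"] gm by simp
      fix i assume "i \<in> {..<n}"
      then show "AE \<omega> in ?O. g (\<omega> i) \<in> {-T..T}"
        using aeO[of i] gb by (auto elim!: eventually_mono)
    qed auto
    define t where "t = sqrt 2 * T * sqrt (ln (1 / \<delta>) / real n)"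
    have ln: "ln (1 / \<delta>) > 0" using d by simp
    have t: "t \<ge> 0" using Tpos ln unfolding t_def by auto
    have t2: "t\<^sup>2 = 2 * T\<^sup>2 * ln (1 / \<delta>) / real n"
      unfolding t_def using ln n by (simp add: power_mult_distrib real_sqrt_pow2 less_imp_le)
    have t2': "t * (t * real n) = T * (T * (2 * ln (1 / \<delta>)))"
      using t2 n by (simp add: power2_eq_square field_simps)
    have sumsq: "(\<Sum>i\<in>{..<n}. (T - - T)\<^sup>2) = real n * 4 * T\<^sup>2"
      by (simp add: power2_eq_square algebra_simps)
    have "-2 * (real n * t)\<^sup>2 / (\<Sum>i\<in>{..<n}. (T - - T)\<^sup>2) = - ln (1 / \<delta>)"
      unfolding sumsq using Tpos n by (simp add: t2' power_mult_distrib field_simps power2_eq_square)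
    then have hb: "O.prob {\<omega> \<in> space ?O. (\<Sum>i\<in>{..<n}. g (\<omega> i)) \<le> (\<Sum>i\<in>{..<n}. \<integral>\<omega>. g (\<omega> i) \<partial>?O) - real n * t} \<le> \<delta>"
      using H.Hoeffding_ineq_le[of "real n * t"] t n Tpos sumsq d
      by (simp add: exp_minus)
    define B where "B = {\<omega> \<in> space ?O. (\<Sum>i\<in>{..<n}. g (\<omega> i)) \<le> (\<Sum>i\<in>{..<n}. \<integral>\<omega>. g (\<omega> i) \<partial>?O) - real n * t}"
    define A where "A = space ?O - B"
    have Bm: "B \<in> sets ?O" unfolding B_def using Xm by measurable
    have Am: "A \<in> sets ?O" unfolding A_def using Bm by auto
    have "measure ?O A = 1 - measure ?O B" unfolding A_def using Bm by (rule O.prob_compl)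
    then have mA: "measure ?O A \<ge> 1 - \<delta>" using hb unfolding B_def by simp
    have sumE: "(\<Sum>i\<in>{..<n}. \<integral>\<omega>. g (\<omega> i) \<partial>?O) = real n * (\<integral>z. g z \<partial>P0)"
      using EX by simp
    have "(\<integral>z. g z \<partial>P0) \<le> (1 / real n) * (\<Sum>i<n. g (\<omega> i)) + t" if "\<omega> \<in> A" for \<omega>
    proof -
      from that have "real n * (\<integral>z. g z \<partial>P0) - real n * t < (\<Sum>i<n. g (\<omega> i))"
        unfolding A_def B_def sumE by auto
      then show ?thesis using n by (simp add: field_simps)
    qed
    then show ?thesis using Am mA unfolding t_def by blast
  qed
qed



lemma rad_flip_distr: "distr rademacher_dist rademacher_dist uminus = rademacher_dist"
proof -
  have "distr rademacher_dist rademacher_dist uminus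
      = distr (measure_pmf (pmf_of_set {-1, 1::real})) (count_space UNIV) uminus"
    unfolding rademacher_dist_def by (intro distr_cong) auto
  also have "\<dots> = measure_pmf (map_pmf uminus (pmf_of_set {-1, 1::real}))"
    by (simp add: map_pmf_rep_eq)
  also have "map_pmf uminus (pmf_of_set {-1, 1::real}) = pmf_of_set {-1, 1}"
    by (subst map_pmf_of_set_inj) (auto simp: insert_commute)
  finally show ?thesis unfolding rademacher_dist_def .
qed

lemma rad_nonneg:
  fixes P0 :: "'a measure" and G :: "('a \<Rightarrow> real) set" and h :: "'a \<Rightarrow> real"
  assumes P0: "prob_space P0" and n: "n > 0" and Zs: "Zs \<in> sets P0" "emeasure P0 Zs = 1"
    and Gne: "G \<noteq> {}" and Gb: "\<forall>g\<in>G. \<forall>z\<in>Zs. \<bar>g z - h z\<bar> \<le> T"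
    and int: "integrable (rad_space n P0) (rad_integrand n G)"
  shows "rademacher_complexity n P0 G \<ge> 0"
proof -
  define N where "N = P0 \<Otimes>\<^sub>M rademacher_dist"
  let ?O = "rad_space n P0"
  have radp: "prob_space rademacher_dist" unfolding rademacher_dist_def
    by (rule measure_pmf.prob_space_axioms)
  interpret p0: prob_space P0 by fact
  interpret r: prob_space rademacher_dist by (rule radp)
  interpret pn: pair_prob_space P0 rademacher_dist ..
  have Np: "prob_space N" unfolding N_def by (rule pn.P.prob_space_axioms)
  have Oeq: "?O = PiM {..<n} (\<lambda>_. N)" unfolding rad_space_def N_def ..
  interpret O: prob_space ?O unfolding Oeq by (intro prob_space_PiM Np)
  define fl :: "'a \<times> real \<Rightarrow> 'a \<times> real" where "fl = (\<lambda>(x, y). (x, - y))"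
  have um: "(uminus :: real \<Rightarrow> real) \<in> measurable rademacher_dist rademacher_dist"
      unfolding rademacher_dist_def by simp
  have flm: "fl \<in> measurable N N"
  proof -
    have "(\<lambda>p. (fst p, uminus (snd p))) \<in> measurable N N"
      unfolding N_def by (rule measurable_Pair[OF measurable_fst measurable_compose[OF measurable_snd um]])
    moreover have "fl = (\<lambda>p. (fst p, uminus (snd p)))" unfolding fl_def by (auto simp: fun_eq_iff)
    ultimately show ?thesis by simp
  qed
  have fld: "distr N N fl = N"
  proof -
    have "distr P0 P0 (\<lambda>x. x) \<Otimes>\<^sub>M distr rademacher_dist rademacher_dist uminus
        = distr (P0 \<Otimes>\<^sub>M rademacher_dist) (P0 \<Otimes>\<^sub>M rademacher_dist) (\<lambda>(x, y). (x, - y))"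
      by (rule pair_measure_distr[OF measurable_ident_sets[OF refl] um]) (simp only: rad_flip_distr prob_space_imp_sigma_finite[OF radp])
    then show ?thesis unfolding N_def fl_def rad_flip_distr by (simp add: distr_id2)
  qed
  define flip where "flip = compose {..<n} fl"
  have flipm: "flip \<in> measurable ?O ?O"
    unfolding flip_def compose_def Oeq
    by (intro measurable_restrict measurable_compose[OF _ flm] measurable_component_singleton) auto
  have flipd: "distr ?O ?O flip = ?O"
  proof -
    have "distr ?O ?O flip = PiM {..<n} (\<lambda>i. distr N N fl)"
      unfolding Oeq flip_def by (intro distr_PiM_finite_prob_space' Np flm) auto
    then show ?thesis unfolding fld Oeq .
  qed
  have Im: "rad_integrand n G \<in> borel_measurable ?O" using int by auto
  have eqI: "(\<integral>\<omega>. rad_integrand n G \<omega> \<partial>?O) = (\<integral>\<omega>. rad_integrand n G (flip \<omega>) \<partial>?O)"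
    using integral_distr[OF flipm Im] flipd by simp
  have int2: "integrable ?O (\<lambda>\<omega>. rad_integrand n G (flip \<omega>))"
    using int flipd integrable_distr_eq[OF flipm Im] by simp
  have aeN: "AE x in N. fst x \<in> Zs"
  proof -
    have e1: "emeasure N (Zs \<times> space rademacher_dist) = emeasure P0 Zs * emeasure rademacher_dist (space rademacher_dist)"
      unfolding N_def by (rule r.emeasure_pair_measure_Times[OF Zs(1) sets.top])
    have sr: "space rademacher_dist = UNIV" unfolding rademacher_dist_def by simp
    have "emeasure N (Zs \<times> UNIV) = 1"
      using e1 r.emeasure_space_1 Zs(2) unfolding sr by simp
    moreover have "Zs \<times> UNIV \<in> sets N" unfolding N_def using Zs by (auto simp: rademacher_dist_def)
    ultimately have "AE x in N. x \<in> Zs \<times> UNIV"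
    proof -
      interpret pN: prob_space N by (rule Np)
      show ?thesis using \<open>emeasure N (Zs \<times> UNIV) = 1\<close> \<open>Zs \<times> UNIV \<in> sets N\<close>
        by (intro pN.AE_prob_1) (auto simp: pN.emeasure_eq_measure)
    qed
    then show ?thesis by (auto elim!: eventually_mono)
  qed
  have aeO: "AE \<omega> in ?O. \<forall>i\<in>{..<n}. fst (\<omega> i) \<in> Zs"
    unfolding Oeq using aeN Np by (intro eventually_ball_finite ballI AE_PiM_component) auto
  have pw: "rad_integrand n G \<omega> + rad_integrand n G (flip \<omega>) \<ge> 0"
    if om: "\<forall>i\<in>{..<n}. fst (\<omega> i) \<in> Zs" for \<omega>
  proof -
    define F where "F g = (1 / real n) * (\<Sum>i<n. snd (\<omega> i) * g (fst (\<omega> i)))" for g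
    define B where "B = (1 / real n) * (\<Sum>i<n. \<bar>snd (\<omega> i)\<bar> * (T + \<bar>h (fst (\<omega> i))\<bar>))"
    have Fb: "\<bar>F g\<bar> \<le> B" if "g \<in> G" for g
    proof -
      have "\<bar>\<Sum>i<n. snd (\<omega> i) * g (fst (\<omega> i))\<bar> \<le> (\<Sum>i<n. \<bar>snd (\<omega> i) * g (fst (\<omega> i))\<bar>)"
        by (rule sum_abs)
      also have "\<dots> \<le> (\<Sum>i<n. \<bar>snd (\<omega> i)\<bar> * (T + \<bar>h (fst (\<omega> i))\<bar>))"
      proof (intro sum_mono)
        fix i assume i: "i \<in> {..<n}"
        have "\<bar>g (fst (\<omega> i))\<bar> \<le> T + \<bar>h (fst (\<omega> i))\<bar>"
        proof -
          have "\<bar>g (fst (\<omega> i)) - h (fst (\<omega> i))\<bar> \<le> T" using Gb that om i by blast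
          then show ?thesis by linarith
        qed
        then show "\<bar>snd (\<omega> i) * g (fst (\<omega> i))\<bar> \<le> \<bar>snd (\<omega> i)\<bar> * (T + \<bar>h (fst (\<omega> i))\<bar>)"
          by (simp add: abs_mult mult_left_mono)
      qed
      finally show ?thesis unfolding F_def B_def using n by (simp add: abs_mult divide_right_mono)
    qed
    have flipF: "(1 / real n) * (\<Sum>i<n. snd (flip \<omega> i) * g (fst (flip \<omega> i))) = - F g" for g
      unfolding F_def flip_def compose_def fl_def
      by (simp add: split_beta sum_negf)
    obtain g0 where g0: "g0 \<in> G" using Gne by auto
    have "F g0 \<le> rad_integrand n G \<omega>"
      unfolding rad_integrand_def F_def[symmetric]
      by (rule cSUP_upper[OF g0]) (use Fb in \<open>force intro: bdd_aboveI2[of _ _ B]\<close>)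
    moreover have "- F g0 \<le> rad_integrand n G (flip \<omega>)"
      unfolding rad_integrand_def flipF
      by (rule cSUP_upper[OF g0]) (use Fb in \<open>force intro: bdd_aboveI2[of _ _ B]\<close>)
    ultimately show ?thesis by simp
  qed
  have "0 \<le> (\<integral>\<omega>. rad_integrand n G \<omega> + rad_integrand n G (flip \<omega>) \<partial>?O)"
    using aeO by (intro integral_nonneg_AE) (auto elim!: eventually_mono intro: pw)
  also have "\<dots> = 2 * (\<integral>\<omega>. rad_integrand n G \<omega> \<partial>?O)"
    using int int2 eqI by simp
  finally show ?thesis unfolding rademacher_complexity_def by simp
qed



lemma cost_meas: "(\<lambda>zz. cost_w m w (fst zz) (snd zz)) \<in> borel_measurable (Zmeas m \<Otimes>\<^sub>M Zmeas m)"
  unfolding cost_w_def Zmeas_def by measurable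

theorem theorem1:
  shows "\<exists>k::real. k \<ge> 0 \<and>
    (\<forall>(m::nat) (n::nat) (P0 :: ((nat \<Rightarrow> real) \<times> real) measure) (Xs :: (nat \<Rightarrow> real) set)
       (Ys :: real set) (f :: (nat \<Rightarrow> real) \<Rightarrow> (nat \<Rightarrow> real) \<Rightarrow> real) (L :: real \<Rightarrow> real \<Rightarrow> real)
       (T :: real) (w :: nat \<Rightarrow> real) (\<theta> :: nat \<Rightarrow> real) (\<rho> :: real) (lam :: real) (\<delta> :: real).
      n > 0 \<and>
      Xs \<times> Ys \<in> sets (Zmeas m) \<and>
      prob_space P0 \<and> sets P0 = sets (Zmeas m) \<and> emeasure P0 (Xs \<times> Ys) = 1 \<and>
      (\<forall>i\<le>m. w i \<ge> 1) \<and>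
      (\<forall>t\<in>Theta m. \<forall>z\<in>Xs \<times> Ys. \<bar>L (f t (fst z)) (snd z)\<bar> \<le> T) \<and>
      (\<forall>z\<in>Xs \<times> Ys. continuous_on (Theta m) (\<lambda>t. L (f t (fst z)) (snd z))) \<and>
      (\<forall>t\<in>Theta m. (\<lambda>z. L (f t (fst z)) (snd z)) \<in> borel_measurable (Zmeas m)) \<and>
      integrable (rad_space n P0)
        (rad_integrand n ((\<lambda>t z. L (f t (fst z)) (snd z) - L 0 (snd z)) ` Theta m)) \<and>
      \<theta> \<in> Theta m \<and> \<rho> \<ge> 0 \<and> lam \<ge> 0 \<and> 0 < \<delta> \<and> \<delta> < 1
      \<longrightarrow>
      (\<exists>A \<in> sets (sample_space n P0).
         measure (sample_space n P0) A \<ge> 1 - \<delta> \<and>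
         (\<forall>\<omega>\<in>A.
            dro_risk (Zmeas m) (Xs \<times> Ys) (cost_w m w) (\<lambda>z. L (f \<theta> (fst z)) (snd z)) P0 \<rho>
            \<le> lam * \<rho>
              + (1 / real n) * (\<Sum>i<n. surrogate (Xs \<times> Ys) (cost_w m w)
                                      (\<lambda>z. L (f \<theta> (fst z)) (snd z)) lam (\<omega> i))
              + rademacher_complexity n P0
                  ((\<lambda>t z. L (f t (fst z)) (snd z) - L 0 (snd z)) ` Theta m)
              + k * T * sqrt (ln (1 / \<delta>) / real n))))"
proof (intro exI[of _ "sqrt 2"] conjI allI impI)
  show "0 \<le> sqrt (2::real)" by simp
  fix m n :: nat and P0 :: "((nat \<Rightarrow> real) \<times> real) measure" and Xs :: "(nat \<Rightarrow> real) set" and Ys :: "real set" and f :: "(nat \<Rightarrow> real) \<Rightarrow> (nat \<Rightarrow> real) \<Rightarrow> real" and L :: "real \<Rightarrow> real \<Rightarrow> real" and T :: real and w :: "nat \<Rightarrow> real" and \<theta> :: "nat \<Rightarrow> real" and \<rho> lam \<delta> :: real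
  assume H: "n > 0 \<and>
      Xs \<times> Ys \<in> sets (Zmeas m) \<and>
      prob_space P0 \<and> sets P0 = sets (Zmeas m) \<and> emeasure P0 (Xs \<times> Ys) = 1 \<and>
      (\<forall>i\<le>m. w i \<ge> 1) \<and>
      (\<forall>t\<in>Theta m. \<forall>z\<in>Xs \<times> Ys. \<bar>L (f t (fst z)) (snd z)\<bar> \<le> T) \<and>
      (\<forall>z\<in>Xs \<times> Ys. continuous_on (Theta m) (\<lambda>t. L (f t (fst z)) (snd z))) \<and>
      (\<forall>t\<in>Theta m. (\<lambda>z. L (f t (fst z)) (snd z)) \<in> borel_measurable (Zmeas m)) \<and>
      integrable (rad_space n P0)
        (rad_integrand n ((\<lambda>t z. L (f t (fst z)) (snd z) - L 0 (snd z)) ` Theta m)) \<and>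
      \<theta> \<in> Theta m \<and> \<rho> \<ge> 0 \<and> lam \<ge> 0 \<and> 0 < \<delta> \<and> \<delta> < 1"
  define Zs where "Zs = Xs \<times> Ys"
  define l where "l = (\<lambda>z. L (f \<theta> (fst z)) (snd z))"
  define c where "c = cost_w m w"
  define s where "s = surrogate Zs c l lam"
  define G where "G = (\<lambda>t z. L (f t (fst z)) (snd z) - L 0 (snd z)) ` Theta m"
  from H have n: "n > 0" and Zm: "Zs \<in> sets (Zmeas m)" and P0: "prob_space P0"
    and sP0: "sets P0 = sets (Zmeas m)" and eZ: "emeasure P0 Zs = 1"
    and bd: "\<forall>t\<in>Theta m. \<forall>z\<in>Zs. \<bar>L (f t (fst z)) (snd z)\<bar> \<le> T"
    and lmeas: "\<forall>t\<in>Theta m. (\<lambda>z. L (f t (fst z)) (snd z)) \<in> borel_measurable (Zmeas m)"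
    and int: "integrable (rad_space n P0) (rad_integrand n G)"
    and th: "\<theta> \<in> Theta m" and rho: "\<rho> \<ge> 0" and lam: "lam \<ge> 0" and d: "0 < \<delta>" "\<delta> < 1"
    unfolding Zs_def G_def by auto
  have Zne: "Zs \<noteq> {}" using eZ by auto
  have Thne: "Theta m \<noteq> {}" unfolding Theta_def by auto
  have lm: "l \<in> borel_measurable (Zmeas m)" unfolding l_def using lmeas th by auto
  have lb: "\<forall>z\<in>Zs. \<bar>l z\<bar> \<le> T" unfolding l_def using bd th by auto
  have bdd: "bdd_above ((\<lambda>\<xi>. l \<xi> - lam * c \<xi> z) ` Zs)" for z
  proof (rule bdd_aboveI2)
    fix \<xi> assume "\<xi> \<in> Zs"
    then show "l \<xi> - lam * c \<xi> z \<le> T"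
      using lb lam cost_nonneg[of m w \<xi> z] unfolding c_def by (smt (verit) mult_nonneg_nonneg)
  qed
  have key: "\<forall>\<xi>\<in>Zs. \<forall>z\<in>Zs. l \<xi> \<le> s z + lam * c \<xi> z"
  proof (intro ballI)
    fix \<xi> z assume "\<xi> \<in> Zs" "z \<in> Zs"
    have "l \<xi> - lam * c \<xi> z \<le> s z"
      unfolding s_def surrogate_def by (rule cSUP_upper[OF \<open>\<xi> \<in> Zs\<close> bdd])
    then show "l \<xi> \<le> s z + lam * c \<xi> z" by simp
  qed
  have c_diag: "c a a = 0" for a unfolding c_def cost_w_def by simp
  have sb: "\<forall>z\<in>Zs. \<bar>s z\<bar> \<le> T"
  proof (intro ballI)
    fix z assume z: "z \<in> Zs"
    have "l z \<le> s z" using key z c_diag by (metis add.right_neutral mult_zero_right)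
    moreover have "s z \<le> T"
      unfolding s_def surrogate_def
    proof (rule cSUP_least[OF Zne])
      fix \<xi> assume "\<xi> \<in> Zs"
      then show "l \<xi> - lam * c \<xi> z \<le> T"
        using lb lam cost_nonneg[of m w \<xi> z] unfolding c_def by (smt (verit) mult_nonneg_nonneg)
    qed
    ultimately show "\<bar>s z\<bar> \<le> T" using lb z by force
  qed
  have sm: "s \<in> borel_measurable (Zmeas m)"
  proof -
    have "s \<in> borel_measurable borel"
      unfolding s_def c_def using lb Zne lam by (intro surrogate_borel[of _ _ T]) auto
    from measurable_comp[OF id_meas_Z this] show ?thesis by (simp add: comp_def)
  qed
  have WD: "dro_risk (Zmeas m) Zs c l P0 \<rho> \<le> lam * \<rho> + (\<integral>z. s z \<partial>P0)"
    by (rule weak_duality[OF P0 sP0 eZ Zm lm lb sm sb]) (use cost_meas cost_nonneg c_diag key lam rho in \<open>auto simp: c_def\<close>)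
  have smP: "s \<in> borel_measurable P0" using sm sP0 measurable_cong_sets by blast
  obtain A where A: "A \<in> sets (sample_space n P0)" "measure (sample_space n P0) A \<ge> 1 - \<delta>"
    "\<forall>\<omega>\<in>A. (\<integral>z. s z \<partial>P0) \<le> (1 / real n) * (\<Sum>i<n. s (\<omega> i)) + sqrt 2 * T * sqrt (ln (1 / \<delta>) / real n)"
    using hoeffding_step[OF P0 smP _ eZ sb n d] Zm sP0 by auto
  have R: "rademacher_complexity n P0 G \<ge> 0"
  proof (rule rad_nonneg[OF P0 n _ eZ _ _ int, of "\<lambda>z. - L 0 (snd z)" T])
    show "Zs \<in> sets P0" using Zm sP0 by simp
    show "G \<noteq> {}" using Thne unfolding G_def by auto
    show "\<forall>g\<in>G. \<forall>z\<in>Zs. \<bar>g z - - L 0 (snd z)\<bar> \<le> T" using bd unfolding G_def by auto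
  qed
  show "\<exists>A \<in> sets (sample_space n P0).
         measure (sample_space n P0) A \<ge> 1 - \<delta> \<and>
         (\<forall>\<omega>\<in>A.
            dro_risk (Zmeas m) (Xs \<times> Ys) (cost_w m w) (\<lambda>z. L (f \<theta> (fst z)) (snd z)) P0 \<rho>
            \<le> lam * \<rho>
              + (1 / real n) * (\<Sum>i<n. surrogate (Xs \<times> Ys) (cost_w m w)
                                      (\<lambda>z. L (f \<theta> (fst z)) (snd z)) lam (\<omega> i))
              + rademacher_complexity n P0
                  ((\<lambda>t z. L (f t (fst z)) (snd z) - L 0 (snd z)) ` Theta m)
              + sqrt 2 * T * sqrt (ln (1 / \<delta>) / real n))"
    unfolding Zs_def[symmetric] l_def[symmetric] c_def[symmetric] s_def[symmetric] G_def[symmetric]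
    using A WD R by (intro bexI[OF _ A(1)] conjI A(2) ballI) force+
qed


end
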